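(* Let $\alpha>0$ be irrational. Suppose there are sequences of positive integers $(p_n)_{n\ge1},(q_n)_{n\ge1}$ with $q_1<q_2<\cdots$ and a constant $K>0$ such that $|\alpha q_n-p_n|\le K/q_n$ for all $n$, and such that both sequences $(p_n)$ and $(q_n)$ are evenly divisible (respectively, strongly evenly divisible). Then for every $\varepsilon>0$ there is $C>0$ with $\delta_{\min}^{(\alpha)}(N)\le C N^{-1+\varepsilon}$ for infinitely many $N$ (respectively, there is $C>0$ with $\delta_{\min}^{(\alpha)}(N)\le C N^{-1}$ for infinitely many $N$). If in addition there is a constant $c>0$ with $q_n\ge c\,q_{n+1}$ for all $n$, then these inequalities hold for all $N\ge 2$.
   Context: For irrational $\alpha>0$, the numbers $\alpha m^2+n^2$ with integers $m,n\ge 1$ are pairwise distinct; list them in increasing order as $0<\lambda_1<\lambda_2<\cdots$. For $N\ge 2$ define $\delta_{\min}^{(\alpha)}(N)=\min\{\lambda_{i+1}-\lambda_i : 1\le i<N\}$. A sequence of positive integers $(a_n)$ is called evenly divisible if for every $\varepsilon>0$ there is $c_\varepsilon>0$ such that each $a_n$ has a divisor $d\mid a_n$ with $\min(d,a_n/d)\ge c_\varepsilon a_n^{1/2-\varepsilon}$; it is called strongly evenly divisible if there is $c>0$ such that each $a_n$ has a divisor $d\mid a_n$ with $\min(d,a_n/d)\ge c\,a_n^{1/2}$. *)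

theory Defs
  imports Complex_Main
begin

definition spec_set :: "real \<Rightarrow> real set" where
  "spec_set \<alpha> = {\<alpha> * real m ^ 2 + real n ^ 2 | m n :: nat. m \<ge> 1 \<and> n \<ge> 1}"

text \<open>lam alpha i is the i-th smallest element (1-indexed): the unique element
  of the set having exactly i - 1 elements of the set strictly below it.\<close>
definition lam :: "real \<Rightarrow> nat \<Rightarrow> real" where
  "lam \<alpha> i = (THE x. x \<in> spec_set \<alpha> \<and> card {y \<in> spec_set \<alpha>. y < x} = i - 1)"

definition delta_min :: "real \<Rightarrow> nat \<Rightarrow> real" where
  "delta_min \<alpha> N = Min {lam \<alpha> (i + 1) - lam \<alpha> i | i. 1 \<le> i \<and> i < N}"

text \<open>Sequences are indexed from 1; only indices n >= 1 matter.\<close>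
definition evenly_divisible :: "(nat \<Rightarrow> nat) \<Rightarrow> bool" where
  "evenly_divisible a \<longleftrightarrow>
     (\<forall>\<epsilon>>0. \<exists>c>0. \<forall>n\<ge>1. \<exists>d. d dvd a n \<and>
        real (min d (a n div d)) \<ge> c * real (a n) powr (1/2 - \<epsilon>))"

definition strongly_evenly_divisible :: "(nat \<Rightarrow> nat) \<Rightarrow> bool" where
  "strongly_evenly_divisible a \<longleftrightarrow>
     (\<exists>c>0. \<forall>n\<ge>1. \<exists>d. d dvd a n \<and>
        real (min d (a n div d)) \<ge> c * real (a n) powr (1/2))"

end

theory Submission
  imports Defs
begin


lemma spec_le_subset:
  assumes a: "\<alpha> > 0" and X: "X \<ge> 0"
  shows "{y \<in> spec_set \<alpha>. y \<le> X} \<subseteq>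
    (\<lambda>(m,n). \<alpha> * real m ^ 2 + real n ^ 2) ` ({1..nat \<lfloor>sqrt (X/\<alpha>)\<rfloor>} \<times> {1..nat \<lfloor>sqrt X\<rfloor>})"
proof
  fix y assume "y \<in> {y \<in> spec_set \<alpha>. y \<le> X}"
  then obtain m n :: nat where y: "y = \<alpha> * real m ^ 2 + real n ^ 2" "m \<ge> 1" "n \<ge> 1" "y \<le> X"
    unfolding spec_set_def by auto
  have "\<alpha> * real m ^ 2 \<le> X" using y by (smt (verit) zero_le_power2)
  hence "real m ^ 2 \<le> X / \<alpha>" using a by (simp add: field_simps)
  hence "real m \<le> sqrt (X/\<alpha>)" using real_le_rsqrt by blast
  hence m: "m \<le> nat \<lfloor>sqrt (X/\<alpha>)\<rfloor>" by (metis le_nat_floor of_nat_nat zero_le_floor real_sqrt_ge_zero divide_nonneg_pos a X nat_le_iff floor_of_nat floor_mono) 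
  have "real n ^ 2 \<le> X" using y a by (smt (verit) mult_nonneg_nonneg zero_le_power2)
  hence "real n \<le> sqrt X" using real_le_rsqrt by blast
  hence n: "n \<le> nat \<lfloor>sqrt X\<rfloor>" by (metis le_nat_floor of_nat_nat zero_le_floor real_sqrt_ge_zero X nat_le_iff floor_of_nat floor_mono)
  show "y \<in> (\<lambda>(m,n). \<alpha> * real m ^ 2 + real n ^ 2) ` ({1..nat \<lfloor>sqrt (X/\<alpha>)\<rfloor>} \<times> {1..nat \<lfloor>sqrt X\<rfloor>})"
    using y m n by force
qed

lemma spec_le_finite:
  assumes a: "\<alpha> > 0"
  shows "finite {y \<in> spec_set \<alpha>. y \<le> X}"
proof (cases "X \<ge> 0")
  case True
  show ?thesis by (rule finite_subset[OF spec_le_subset[OF a True]]) auto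
next
  case False
  have "\<And>y. y \<in> spec_set \<alpha> \<Longrightarrow> y \<ge> 0" using a unfolding spec_set_def by auto
  hence "{y \<in> spec_set \<alpha>. y \<le> X} = {}" using False by force
  thus ?thesis by (metis finite.emptyI)
qed

lemma spec_less_finite:
  assumes a: "\<alpha> > 0"
  shows "finite {y \<in> spec_set \<alpha>. y < X}"
  by (rule finite_subset[OF _ spec_le_finite[OF a, of X]]) auto

lemma spec_le_card:
  assumes a: "\<alpha> > 0" and X: "X \<ge> 0"
  shows "real (card {y \<in> spec_set \<alpha>. y \<le> X}) \<le> X / sqrt \<alpha>"
proof -
  let ?a = "nat \<lfloor>sqrt (X/\<alpha>)\<rfloor>" and ?b = "nat \<lfloor>sqrt X\<rfloor>"
  have "card {y \<in> spec_set \<alpha>. y \<le> X} \<le> card ((\<lambda>(m,n). \<alpha> * real m ^ 2 + real n ^ 2) ` ({1..?a} \<times> {1..?b}))"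
    by (rule card_mono[OF _ spec_le_subset[OF a X]]) auto
  also have "\<dots> \<le> card ({1..?a} \<times> {1..?b})" by (rule card_image_le) auto
  also have "\<dots> = ?a * ?b" by (simp add: card_cartesian_product)
  finally have c: "real (card {y \<in> spec_set \<alpha>. y \<le> X}) \<le> real ?a * real ?b" by (metis of_nat_le_iff of_nat_mult)
  have nn: "X/\<alpha> \<ge> 0" using X a by simp
  hence "\<lfloor>sqrt (X/\<alpha>)\<rfloor> \<ge> 0" by simp
  hence "real ?a \<le> sqrt (X/\<alpha>)" by (metis of_nat_nat of_int_floor_le)
  moreover have "real ?b \<le> sqrt X" using X by (simp add: of_nat_nat)
  ultimately have "real ?a * real ?b \<le> sqrt (X/\<alpha>) * sqrt X" using nn by (metis mult_mono real_sqrt_ge_zero of_nat_0_le_iff)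
  also have "\<dots> = X / sqrt \<alpha>" using X a by (simp add: real_sqrt_divide)
  finally show ?thesis using c by linarith
qed

lemma card_less_mono:
  assumes a: "\<alpha> > 0" and x: "x \<in> spec_set \<alpha>" and xy: "x < x'"
  shows "card {y \<in> spec_set \<alpha>. y < x} < card {y \<in> spec_set \<alpha>. y < x'}"
  by (rule psubset_card_mono[OF spec_less_finite[OF a]]) (use x xy in auto)

lemma lam_eq:
  assumes a: "\<alpha> > 0" and x: "x \<in> spec_set \<alpha>"
  shows "lam \<alpha> (card {y \<in> spec_set \<alpha>. y < x} + 1) = x"
  unfolding lam_def
proof (rule the_equality)
  show "x \<in> spec_set \<alpha> \<and> card {y \<in> spec_set \<alpha>. y < x} = card {y \<in> spec_set \<alpha>. y < x} + 1 - 1"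
    using x by simp
next
  fix z assume z: "z \<in> spec_set \<alpha> \<and> card {y \<in> spec_set \<alpha>. y < z} = card {y \<in> spec_set \<alpha>. y < x} + 1 - 1"
  show "z = x"
  proof (rule ccontr)
    assume "z \<noteq> x"
    then consider "z < x" | "x < z" by linarith
    thus False
    proof cases
      case 1 thus False using card_less_mono[OF a _ 1] z by simp
    next
      case 2 thus False using card_less_mono[OF a x 2] z by simp
    qed
  qed
qed

lemma delta_min_le:
  assumes "1 \<le> i" "i < N"
  shows "delta_min \<alpha> N \<le> lam \<alpha> (i + 1) - lam \<alpha> i"
  unfolding delta_min_def
  by (rule Min_le) (use assms in auto)

lemma delta_min_mono:
  assumes "2 \<le> N" "N \<le> M"
  shows "delta_min \<alpha> M \<le> delta_min \<alpha> N"
  unfolding delta_min_def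
proof (rule Min_antimono)
  show "{lam \<alpha> (i + 1) - lam \<alpha> i |i. 1 \<le> i \<and> i < N} \<subseteq> {lam \<alpha> (i + 1) - lam \<alpha> i |i. 1 \<le> i \<and> i < M}"
    using assms by fastforce
  show "{lam \<alpha> (i + 1) - lam \<alpha> i |i. 1 \<le> i \<and> i < N} \<noteq> {}"
    using assms by (auto intro!: exI[of _ 1])
qed auto

lemma gap:
  assumes a: "\<alpha> > 0" and A: "A \<in> spec_set \<alpha>" and B: "B \<in> spec_set \<alpha>"
    and AB: "A < B" and BX: "B \<le> X"
  shows "2 \<le> card {y \<in> spec_set \<alpha>. y \<le> X} \<and>
         delta_min \<alpha> (card {y \<in> spec_set \<alpha>. y \<le> X}) \<le> B - A"
proof -
  define i where "i = card {y \<in> spec_set \<alpha>. y < A} + 1"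
  have li: "lam \<alpha> i = A" using lam_eq[OF a A] i_def by simp
  define T where "T = {y \<in> spec_set \<alpha>. A < y \<and> y \<le> B}"
  have fT: "finite T" unfolding T_def by (rule finite_subset[OF _ spec_le_finite[OF a, of B]]) auto
  have BT: "B \<in> T" using B AB unfolding T_def by auto
  define x where "x = Min T"
  have xT: "x \<in> T" unfolding x_def using fT BT Min_in by blast
  have xmin: "\<And>y. y \<in> T \<Longrightarrow> x \<le> y" unfolding x_def using fT by simp
  have eqs: "{y \<in> spec_set \<alpha>. y < x} = insert A {y \<in> spec_set \<alpha>. y < A}"
  proof
    show "{y \<in> spec_set \<alpha>. y < x} \<subseteq> insert A {y \<in> spec_set \<alpha>. y < A}"
    proof
      fix y assume y: "y \<in> {y \<in> spec_set \<alpha>. y < x}"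
      have "\<not> A < y"
      proof
        assume "A < y"
        hence "y \<in> T" using y xT unfolding T_def by auto
        thus False using xmin y by force
      qed
      thus "y \<in> insert A {y \<in> spec_set \<alpha>. y < A}" using y by auto
    qed
  next
    show "insert A {y \<in> spec_set \<alpha>. y < A} \<subseteq> {y \<in> spec_set \<alpha>. y < x}"
      using A xT unfolding T_def by auto
  qed
  have "card {y \<in> spec_set \<alpha>. y < x} = i"
    unfolding eqs i_def by (subst card_insert_disjoint) (auto simp: spec_less_finite[OF a])
  hence li1: "lam \<alpha> (i + 1) = x" using lam_eq[of \<alpha> x] a xT unfolding T_def by auto
  have "{y \<in> spec_set \<alpha>. y \<le> A} = insert A {y \<in> spec_set \<alpha>. y < A}" using A by auto
  hence cA: "card {y \<in> spec_set \<alpha>. y \<le> A} = i"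
    unfolding i_def by (simp add: spec_less_finite[OF a])
  have "card {y \<in> spec_set \<alpha>. y \<le> A} < card {y \<in> spec_set \<alpha>. y \<le> B}"
  proof (rule psubset_card_mono[OF spec_le_finite[OF a]])
    have "{y \<in> spec_set \<alpha>. y \<le> A} \<subseteq> {y \<in> spec_set \<alpha>. y \<le> B}" using AB by auto
    moreover have "B \<in> {y \<in> spec_set \<alpha>. y \<le> B}" "B \<notin> {y \<in> spec_set \<alpha>. y \<le> A}" using AB B by auto
    ultimately show "{y \<in> spec_set \<alpha>. y \<le> A} \<subset> {y \<in> spec_set \<alpha>. y \<le> B}" by blast
  qed
  also have "\<dots> \<le> card {y \<in> spec_set \<alpha>. y \<le> X}"
    by (rule card_mono[OF spec_le_finite[OF a]]) (use BX in auto)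
  finally have iN: "i < card {y \<in> spec_set \<alpha>. y \<le> X}" using cA by simp
  have "delta_min \<alpha> (card {y \<in> spec_set \<alpha>. y \<le> X}) \<le> lam \<alpha> (i + 1) - lam \<alpha> i"
    by (rule delta_min_le) (use iN i_def in auto)
  also have "\<dots> \<le> B - A" using li li1 xT unfolding T_def by auto
  finally show ?thesis using iN i_def by auto
qed



lemma factor:
  assumes Q: "Q > 0" and d: "d dvd Q" and c: "c > 0"
    and h: "real (min d (Q div d)) \<ge> c * real Q powr (1/2 - \<eta>)"
  shows "\<exists>s t. s * t = Q \<and> 1 \<le> s \<and> s \<le> t \<and> real t ^ 2 \<le> real Q powr (1 + 2*\<eta>) / c^2"
proof -
  define e where "e = Q div d"
  have de: "d * e = Q" using d e_def by simp
  define s where "s = min d e"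
  define t where "t = max d e"
  have st: "s * t = Q" using de unfolding s_def t_def by (cases "d \<le> e") (auto simp: mult.commute)
  have qpos: "real Q > 0" using Q by simp
  have sge: "real s \<ge> c * real Q powr (1/2 - \<eta>)" using h unfolding s_def e_def by simp
  have pp: "c * real Q powr (1/2 - \<eta>) > 0" using c qpos by simp
  hence spos: "real s > 0" using sge by linarith
  hence s1: "1 \<le> s" by simp
  have "real t = real Q / real s" using st spos by (metis nonzero_mult_div_cancel_left of_nat_mult of_nat_0_less_iff less_irrefl)
  also have "\<dots> \<le> real Q / (c * real Q powr (1/2 - \<eta>))"
    by (rule divide_left_mono[OF sge]) (use pp qpos spos in auto)
  also have "\<dots> = real Q powr (1/2 + \<eta>) / c"
  proof -
    have "real Q powr (1/2 + \<eta>) * real Q powr (1/2 - \<eta>) = real Q"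
      using qpos by (simp add: powr_add[symmetric])
    thus ?thesis using c qpos by (auto simp: field_simps)
  qed
  finally have tle: "real t \<le> real Q powr (1/2 + \<eta>) / c" .
  have "real t ^ 2 \<le> (real Q powr (1/2 + \<eta>) / c) ^ 2"
    by (rule power_mono[OF tle]) simp
  also have "\<dots> = real Q powr (1 + 2*\<eta>) / c^2"
  proof -
    have "(real Q powr (1/2 + \<eta>))^2 = real Q powr (1 + 2*\<eta>)"
      using qpos by (simp add: power2_eq_square powr_add[symmetric])
    thus ?thesis by (simp add: power_divide)
  qed
  finally show ?thesis using st s1 unfolding s_def t_def by (intro exI[of _ s] exI[of _ t]) (auto simp: s_def t_def)
qed

lemma construct:
  assumes a: "\<alpha> > 0" and irr: "\<alpha> \<notin> \<rat>" and K: "K > 0"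
    and Q: "Q > 0" and P: "P > 0" and app: "\<bar>\<alpha> * real Q - real P\<bar> \<le> K / real Q"
    and st: "s * t = Q" "1 \<le> s" "s \<le> t"
    and uv: "u * v = P" "1 \<le> u" "u \<le> v"
  shows "\<exists>N. 2 \<le> N \<and> real N \<le> 25 * (\<alpha> * real t ^ 2 + real v ^ 2) / sqrt \<alpha>
     \<and> delta_min \<alpha> N \<le> 16 * K / real Q \<and> (\<forall>M. \<alpha> + real M ^ 2 \<le> \<alpha> * real Q \<longrightarrow> M \<le> N)"
proof -
  define m1 where "m1 = s + 4*t"
  define m2 where "m2 = 4*t - s"
  define n1 where "n1 = 4*v - u"
  define n2 where "n2 = u + 4*v"
  have rm2: "real m2 = 4 * real t - real s" using st unfolding m2_def by (simp add: of_nat_diff)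
  have rn1: "real n1 = 4 * real v - real u" using uv unfolding n1_def by (simp add: of_nat_diff)
  have rm1: "real m1 = real s + 4 * real t" unfolding m1_def by simp
  have rn2: "real n2 = real u + 4 * real v" unfolding n2_def by simp
  define A where "A = \<alpha> * real m1 ^ 2 + real n1 ^ 2"
  define B where "B = \<alpha> * real m2 ^ 2 + real n2 ^ 2"
  define X where "X = 25 * (\<alpha> * real t ^ 2 + real v ^ 2)"
  have ge1: "m1 \<ge> 1" "n1 \<ge> 1" "m2 \<ge> 1" "n2 \<ge> 1" using st uv
    by (auto simp: m1_def n1_def m2_def n2_def)
  have AS: "A \<in> spec_set \<alpha>" unfolding A_def spec_set_def using ge1 by blast
  have BS: "B \<in> spec_set \<alpha>" unfolding B_def spec_set_def using ge1 by blast
  have rs: "real s \<ge> 1" "real s \<le> real t" "real u \<ge> 1" "real u \<le> real v" using st uv by auto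
  have rQ: "real Q = real s * real t" using st by (metis of_nat_mult)
  have rP: "real P = real u * real v" using uv by (metis of_nat_mult)
  have diff: "B - A = 16 * (real P - \<alpha> * real Q)"
    unfolding A_def B_def rm1 rm2 rn1 rn2 rQ rP by (simp add: power2_eq_square algebra_simps)
  have AX: "A \<le> X"
  proof -
    have "real m1 ^ 2 \<le> (5 * real t)^2" unfolding rm1 by (rule power_mono) (use rs in auto)
    moreover have "real n1 ^ 2 \<le> (5 * real v)^2" unfolding rn1 by (rule power_mono) (use rs in auto)
    ultimately have "real m1 ^ 2 \<le> 25 * real t ^ 2" "real n1 ^ 2 \<le> 25 * real v ^ 2" by (simp_all add: power_mult_distrib)
    moreover have "\<alpha> * real m1 ^ 2 \<le> \<alpha> * (25 * real t ^ 2)" by (rule mult_left_mono) (use a calculation in auto)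
    ultimately show ?thesis unfolding A_def X_def by (simp add: algebra_simps)
  qed
  have BX: "B \<le> X"
  proof -
    have "real m2 ^ 2 \<le> (5 * real t)^2" unfolding rm2 by (rule power_mono) (use rs in auto)
    moreover have "real n2 ^ 2 \<le> (5 * real v)^2" unfolding rn2 by (rule power_mono) (use rs in auto)
    ultimately have "real m2 ^ 2 \<le> 25 * real t ^ 2" "real n2 ^ 2 \<le> 25 * real v ^ 2" by (simp_all add: power_mult_distrib)
    moreover have "\<alpha> * real m2 ^ 2 \<le> \<alpha> * (25 * real t ^ 2)" by (rule mult_left_mono) (use a calculation in auto)
    ultimately show ?thesis unfolding B_def X_def by (simp add: algebra_simps)
  qed
  have AB: "A \<noteq> B"
  proof
    assume "A = B"
    hence "real P = \<alpha> * real Q" using diff by simp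
    hence "\<alpha> = real P / real Q" using Q by (simp add: field_simps)
    hence "\<alpha> \<in> \<rat>" by simp
    thus False using irr by simp
  qed
  define N where "N = card {y \<in> spec_set \<alpha>. y \<le> X}"
  have g: "2 \<le> N \<and> delta_min \<alpha> N \<le> \<bar>B - A\<bar>"
  proof (cases "A < B")
    case True thus ?thesis using gap[OF a AS BS True BX] unfolding N_def by simp
  next
    case False
    hence "B < A" using AB by simp
    thus ?thesis using gap[OF a BS AS _ AX] unfolding N_def by simp
  qed
  have "\<bar>B - A\<bar> = 16 * \<bar>\<alpha> * real Q - real P\<bar>" unfolding diff by (simp add: abs_if)
  also have "\<dots> \<le> 16 * K / real Q" using app by simp
  finally have d: "delta_min \<alpha> N \<le> 16 * K / real Q" using g by linarith
  have X0: "X \<ge> 0" unfolding X_def using a by simp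
  have Nb: "real N \<le> X / sqrt \<alpha>" unfolding N_def by (rule spec_le_card[OF a X0])
  have QA: "\<alpha> * real Q \<le> A"
  proof -
    have "real Q \<le> real m1 ^ 2" unfolding rQ rm1 using rs
      by (simp add: power2_eq_square algebra_simps)
    hence "\<alpha> * real Q \<le> \<alpha> * real m1 ^ 2" using a by simp
    thus ?thesis unfolding A_def using zero_le_power2[of "real n1"] by linarith
  qed
  have lower: "\<forall>M. \<alpha> + real M ^ 2 \<le> \<alpha> * real Q \<longrightarrow> M \<le> N"
  proof (intro allI impI)
    fix M assume hM: "\<alpha> + real M ^ 2 \<le> \<alpha> * real Q"
    have sub: "(\<lambda>k. \<alpha> * real (1::nat) ^ 2 + real k ^ 2) ` {1..M} \<subseteq> {y \<in> spec_set \<alpha>. y \<le> X}"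
    proof
      fix y assume "y \<in> (\<lambda>k. \<alpha> * real (1::nat) ^ 2 + real k ^ 2) ` {1..M}"
      then obtain k where k: "k \<in> {1..M}" "y = \<alpha> * real (1::nat) ^ 2 + real k ^ 2" by auto
      have "real k ^ 2 \<le> real M ^ 2" using k by (simp add: power_mono)
      hence "y \<le> X" using k hM QA AX by (simp only: of_nat_1 power_one mult_1_right)
      moreover have "y \<in> spec_set \<alpha>" unfolding spec_set_def using k by (intro CollectI exI[of _ "1::nat"] exI[of _ k]) auto
      ultimately show "y \<in> {y \<in> spec_set \<alpha>. y \<le> X}" by simp
    qed
    have inj: "inj_on (\<lambda>k. \<alpha> * real (1::nat) ^ 2 + real k ^ 2) {1..M}"
      by (rule inj_onI) simp
    have "card ((\<lambda>k. \<alpha> * real (1::nat) ^ 2 + real k ^ 2) ` {1..M}) \<le> N"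
      unfolding N_def by (rule card_mono[OF spec_le_finite[OF a] sub])
    thus "M \<le> N" using card_image[OF inj] by simp
  qed
  show ?thesis using g d Nb lower unfolding X_def by blast
qed



lemma finalineq:
  fixes \<epsilon> \<delta> K Q N C0 :: real
  assumes e: "0 \<le> \<epsilon>" "\<epsilon> \<le> 1" and d: "\<delta> \<le> 16 * K / Q" and Q: "Q \<ge> 1"
    and N: "N \<le> C0 * Q powr (1 + \<epsilon>)" "N \<ge> 1" and C0: "C0 > 0" and K: "K > 0"
  shows "\<delta> \<le> 16 * K * C0 powr (1 - \<epsilon>) * N powr (-1 + \<epsilon>)"
proof -
  have "N powr (1 - \<epsilon>) \<le> (C0 * Q powr (1 + \<epsilon>)) powr (1 - \<epsilon>)"
    using powr_mono2[of "1-\<epsilon>" N "C0 * Q powr (1+\<epsilon>)"] e N by auto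
  also have "\<dots> = C0 powr (1 - \<epsilon>) * Q powr ((1 + \<epsilon>) * (1 - \<epsilon>))"
    using C0 Q by (simp add: powr_mult powr_powr)
  also have "\<dots> \<le> C0 powr (1 - \<epsilon>) * Q powr 1"
  proof (rule mult_left_mono)
    show "Q powr ((1 + \<epsilon>) * (1 - \<epsilon>)) \<le> Q powr 1"
      by (rule powr_mono) (use Q in \<open>auto simp: algebra_simps\<close>)
  qed simp
  finally have h: "N powr (1 - \<epsilon>) \<le> C0 powr (1 - \<epsilon>) * Q" using Q by simp
  have Npos: "N powr (1 - \<epsilon>) > 0" using N by simp
  have "N powr (-1 + \<epsilon>) = 1 / N powr (1 - \<epsilon>)"
    using N by (simp add: powr_minus_divide[symmetric] powr_minus)
  moreover have "1 / Q \<le> C0 powr (1 - \<epsilon>) / N powr (1 - \<epsilon>)"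
    using h Npos Q by (simp add: field_simps)
  ultimately have "1 / Q \<le> C0 powr (1 - \<epsilon>) * N powr (-1 + \<epsilon>)" by simp
  hence "16 * K / Q \<le> 16 * K * (C0 powr (1 - \<epsilon>) * N powr (-1 + \<epsilon>))"
    using K by (metis (no_types, opaque_lifting) divide_inverse mult_left_mono less_eq_real_def mult_pos_pos zero_less_numeral inverse_eq_divide)
  thus ?thesis using d by (simp add: mult.assoc)
qed

lemma uniform:
  assumes a: "\<alpha> > 0" and irr: "\<alpha> \<notin> \<rat>" and K: "K > 0" and e: "0 \<le> \<epsilon>" "\<epsilon> \<le> 1"
    and c1: "c1 > 0" and c2: "c2 > 0"
  shows "\<exists>C0>0. \<forall>P Q. Q > 0 \<longrightarrow> P > 0 \<longrightarrow> \<bar>\<alpha> * real Q - real P\<bar> \<le> K / real Q \<longrightarrow>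
     (\<exists>d. d dvd Q \<and> real (min d (Q div d)) \<ge> c1 * real Q powr (1/2 - \<epsilon>/2)) \<longrightarrow>
     (\<exists>d. d dvd P \<and> real (min d (P div d)) \<ge> c2 * real P powr (1/2 - \<epsilon>/2)) \<longrightarrow>
     (\<exists>N. 2 \<le> N \<and> real N \<le> C0 * real Q powr (1 + \<epsilon>) \<and> delta_min \<alpha> N \<le> 16 * K / real Q
        \<and> (\<forall>M. \<alpha> + real M ^ 2 \<le> \<alpha> * real Q \<longrightarrow> M \<le> N))"
proof -
  define C0 where "C0 = 25 * (\<alpha> / c1^2 + (\<alpha> + K) powr (1 + \<epsilon>) / c2^2) / sqrt \<alpha>"
  have C0: "C0 > 0" unfolding C0_def using a c1 c2 K by (simp add: add_pos_pos)
  show ?thesis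
  proof (intro exI[of _ C0] conjI allI impI C0)
    fix P Q :: nat
    assume Q: "Q > 0" and P: "P > 0" and app: "\<bar>\<alpha> * real Q - real P\<bar> \<le> K / real Q"
      and fq: "\<exists>d. d dvd Q \<and> real (min d (Q div d)) \<ge> c1 * real Q powr (1/2 - \<epsilon>/2)"
      and fp: "\<exists>d. d dvd P \<and> real (min d (P div d)) \<ge> c2 * real P powr (1/2 - \<epsilon>/2)"
    obtain s t where st: "s * t = Q" "1 \<le> s" "s \<le> t" and tb: "real t ^ 2 \<le> real Q powr (1 + 2*(\<epsilon>/2)) / c1^2"
      using fq factor[OF Q _ c1] by blast
    obtain u v where uv: "u * v = P" "1 \<le> u" "u \<le> v" and vb: "real v ^ 2 \<le> real P powr (1 + 2*(\<epsilon>/2)) / c2^2"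
      using fp factor[OF P _ c2] by blast
    obtain N where N: "2 \<le> N" "real N \<le> 25 * (\<alpha> * real t ^ 2 + real v ^ 2) / sqrt \<alpha>"
      "delta_min \<alpha> N \<le> 16 * K / real Q" "\<forall>M. \<alpha> + real M ^ 2 \<le> \<alpha> * real Q \<longrightarrow> M \<le> N"
      using construct[OF a irr K Q P app st uv] by blast
    have rQ: "real Q \<ge> 1" using Q by simp
    have "real P \<le> \<alpha> * real Q + K / real Q" using app by linarith
    also have "K / real Q \<le> K * real Q" using rQ K
      by (metis divide_le_eq less_le_trans mult.commute mult_right_mono zero_less_one less_eq_real_def mult_1 order_trans mult_le_cancel_left1 mult_pos_pos)
    hence "\<alpha> * real Q + K / real Q \<le> (\<alpha> + K) * real Q" by (simp add: algebra_simps)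
    finally have Pb: "real P \<le> (\<alpha> + K) * real Q" by simp
    have "real P powr (1 + \<epsilon>) \<le> ((\<alpha> + K) * real Q) powr (1 + \<epsilon>)"
      by (rule powr_mono2) (use e Pb in auto)
    also have "\<dots> = (\<alpha> + K) powr (1 + \<epsilon>) * real Q powr (1 + \<epsilon>)"
      using a K by (simp add: powr_mult)
    finally have Pb2: "real P powr (1 + \<epsilon>) \<le> (\<alpha> + K) powr (1 + \<epsilon>) * real Q powr (1 + \<epsilon>)" .
    have tb': "\<alpha> * real t ^ 2 \<le> \<alpha> / c1^2 * real Q powr (1 + \<epsilon>)"
      using mult_left_mono[OF tb, of \<alpha>] a by simp
    have vb': "real v ^ 2 \<le> (\<alpha> + K) powr (1 + \<epsilon>) / c2^2 * real Q powr (1 + \<epsilon>)"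
    proof -
      have "real v ^ 2 \<le> real P powr (1 + \<epsilon>) / c2^2" using vb by simp
      also have "\<dots> \<le> (\<alpha> + K) powr (1 + \<epsilon>) * real Q powr (1 + \<epsilon>) / c2^2"
        by (rule divide_right_mono[OF Pb2]) simp
      finally show ?thesis by simp
    qed
    have "25 * (\<alpha> * real t ^ 2 + real v ^ 2) / sqrt \<alpha> \<le>
          25 * ((\<alpha> / c1^2 + (\<alpha> + K) powr (1 + \<epsilon>) / c2^2) * real Q powr (1 + \<epsilon>)) / sqrt \<alpha>"
    proof (rule divide_right_mono)
      have "\<alpha> * real t ^ 2 + real v ^ 2 \<le> (\<alpha> / c1^2 + (\<alpha> + K) powr (1 + \<epsilon>) / c2^2) * real Q powr (1 + \<epsilon>)"
        unfolding distrib_right using tb' vb' by linarith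
      thus "25 * (\<alpha> * real t ^ 2 + real v ^ 2) \<le> 25 * ((\<alpha> / c1^2 + (\<alpha> + K) powr (1 + \<epsilon>) / c2^2) * real Q powr (1 + \<epsilon>))"
        by simp
    qed (use a in simp)
    also have "\<dots> = C0 * real Q powr (1 + \<epsilon>)" unfolding C0_def by simp
    finally show "\<exists>N. 2 \<le> N \<and> real N \<le> C0 * real Q powr (1 + \<epsilon>) \<and> delta_min \<alpha> N \<le> 16 * K / real Q
        \<and> (\<forall>M. \<alpha> + real M ^ 2 \<le> \<alpha> * real Q \<longrightarrow> M \<le> N)" using N by (intro exI[of _ N]) auto
  qed
qed



lemma q_ge:
  fixes p q :: "nat \<Rightarrow> nat" and n :: nat
  assumes "\<forall>n\<ge>1. p n > 0 \<and> q n > 0" and "\<forall>n\<ge>1. q n < q (n + 1)"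
  shows "n \<ge> 1 \<Longrightarrow> q n \<ge> n"
proof (induction n rule: nat_induct_at_least)
  case base thus ?case using assms(1) by (simp add: Suc_le_eq)
next
  case (Suc n) thus ?case using assms(2) by (metis Suc_eq_plus1 Suc_le_eq le_less_trans)
qed

lemma per_n:
  fixes \<alpha> K :: real and p q :: "nat \<Rightarrow> nat"
  assumes a: "\<alpha> > 0" and irr: "\<alpha> \<notin> \<rat>"
    and pos: "\<forall>n\<ge>1. p n > 0 \<and> q n > 0"
    and K: "K > 0"
    and app: "\<forall>n\<ge>1. \<bar>\<alpha> * real (q n) - real (p n)\<bar> \<le> K / real (q n)"
    and e: "0 \<le> \<epsilon>" "\<epsilon> \<le> 1" and c1: "c1 > 0" and c2: "c2 > 0"
    and hq: "\<forall>n\<ge>1. \<exists>d. d dvd q n \<and> real (min d (q n div d)) \<ge> c1 * real (q n) powr (1/2 - \<epsilon>/2)"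
    and hp: "\<forall>n\<ge>1. \<exists>d. d dvd p n \<and> real (min d (p n div d)) \<ge> c2 * real (p n) powr (1/2 - \<epsilon>/2)"
  shows "\<exists>C0>0. \<forall>n\<ge>1. \<exists>N. 2 \<le> N \<and> real N \<le> C0 * real (q n) powr (1 + \<epsilon>)
     \<and> delta_min \<alpha> N \<le> 16 * K / real (q n) \<and> (\<forall>M. \<alpha> + real M ^ 2 \<le> \<alpha> * real (q n) \<longrightarrow> M \<le> N)"
proof -
  obtain C0 where C0: "C0 > 0" and U: "\<forall>P Q. Q > 0 \<longrightarrow> P > 0 \<longrightarrow> \<bar>\<alpha> * real Q - real P\<bar> \<le> K / real Q \<longrightarrow>
     (\<exists>d. d dvd Q \<and> real (min d (Q div d)) \<ge> c1 * real Q powr (1/2 - \<epsilon>/2)) \<longrightarrow>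
     (\<exists>d. d dvd P \<and> real (min d (P div d)) \<ge> c2 * real P powr (1/2 - \<epsilon>/2)) \<longrightarrow>
     (\<exists>N. 2 \<le> N \<and> real N \<le> C0 * real Q powr (1 + \<epsilon>) \<and> delta_min \<alpha> N \<le> 16 * K / real Q
        \<and> (\<forall>M. \<alpha> + real M ^ 2 \<le> \<alpha> * real Q \<longrightarrow> M \<le> N))"
    using uniform[OF a irr K e c1 c2] by blast
  show ?thesis
  proof (intro exI[of _ C0] conjI allI impI C0)
    fix n :: nat assume n: "n \<ge> 1"
    show "\<exists>N. 2 \<le> N \<and> real N \<le> C0 * real (q n) powr (1 + \<epsilon>)
     \<and> delta_min \<alpha> N \<le> 16 * K / real (q n) \<and> (\<forall>M. \<alpha> + real M ^ 2 \<le> \<alpha> * real (q n) \<longrightarrow> M \<le> N)"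
    proof -
      have "q n > 0" "p n > 0" using pos n by auto
      moreover have "\<bar>\<alpha> * real (q n) - real (p n)\<bar> \<le> K / real (q n)" using app n by auto
      moreover have "\<exists>d. d dvd q n \<and> real (min d (q n div d)) \<ge> c1 * real (q n) powr (1/2 - \<epsilon>/2)" using hq n by auto
      moreover have "\<exists>d. d dvd p n \<and> real (min d (p n div d)) \<ge> c2 * real (p n) powr (1/2 - \<epsilon>/2)" using hp n by auto
      ultimately show ?thesis using U by presburger
    qed
  qed
qed

lemma inf_part:
  fixes \<alpha> K :: real and p q :: "nat \<Rightarrow> nat"
  assumes a: "\<alpha> > 0" and irr: "\<alpha> \<notin> \<rat>"
    and pos: "\<forall>n\<ge>1. p n > 0 \<and> q n > 0"
    and inc: "\<forall>n\<ge>1. q n < q (n + 1)"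
    and K: "K > 0"
    and app: "\<forall>n\<ge>1. \<bar>\<alpha> * real (q n) - real (p n)\<bar> \<le> K / real (q n)"
    and e: "0 \<le> \<epsilon>" "\<epsilon> \<le> 1" and c1: "c1 > 0" and c2: "c2 > 0"
    and hq: "\<forall>n\<ge>1. \<exists>d. d dvd q n \<and> real (min d (q n div d)) \<ge> c1 * real (q n) powr (1/2 - \<epsilon>/2)"
    and hp: "\<forall>n\<ge>1. \<exists>d. d dvd p n \<and> real (min d (p n div d)) \<ge> c2 * real (p n) powr (1/2 - \<epsilon>/2)"
  shows "\<exists>C>0. \<exists>\<^sub>\<infinity>N. delta_min \<alpha> N \<le> C * real N powr (-1 + \<epsilon>)"
proof -
  obtain C0 where C0: "C0 > 0" and U: "\<forall>n\<ge>1. \<exists>N. 2 \<le> N \<and> real N \<le> C0 * real (q n) powr (1 + \<epsilon>)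
     \<and> delta_min \<alpha> N \<le> 16 * K / real (q n) \<and> (\<forall>M. \<alpha> + real M ^ 2 \<le> \<alpha> * real (q n) \<longrightarrow> M \<le> N)"
    using per_n[OF a irr pos K app e c1 c2 hq hp] by blast
  define C where "C = 16 * K * C0 powr (1 - \<epsilon>)"
  have Cpos: "C > 0" unfolding C_def using K C0 by simp
  have "\<exists>\<^sub>\<infinity>N. delta_min \<alpha> N \<le> C * real N powr (-1 + \<epsilon>)"
    unfolding cofinite_eq_sequentially frequently_sequentially
  proof
    fix m :: nat
    define n where "n = 1 + nat \<lceil>real m ^ 2 / \<alpha>\<rceil>"
    have n1: "n \<ge> 1" unfolding n_def by simp
    have qn: "q n \<ge> n" using q_ge[OF pos inc n1] .
    have "real m ^ 2 / \<alpha> \<le> real (nat \<lceil>real m ^ 2 / \<alpha>\<rceil>)" by linarith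
    hence "1 + real m ^ 2 / \<alpha> \<le> real (q n)" using qn unfolding n_def by linarith
    hence "\<alpha> * (1 + real m ^ 2 / \<alpha>) \<le> \<alpha> * real (q n)" using a by simp
    hence mq: "\<alpha> + real m ^ 2 \<le> \<alpha> * real (q n)" using a by (simp add: algebra_simps)
    obtain N where N: "2 \<le> N" "real N \<le> C0 * real (q n) powr (1 + \<epsilon>)"
      "delta_min \<alpha> N \<le> 16 * K / real (q n)" "m \<le> N"
      using U n1 mq by blast
    have "delta_min \<alpha> N \<le> C * real N powr (-1 + \<epsilon>)"
      unfolding C_def by (rule finalineq[OF e N(3) _ N(2) _ C0 K]) (use qn n1 N in auto)
    thus "\<exists>N\<ge>m. delta_min \<alpha> N \<le> C * real N powr (-1 + \<epsilon>)" using N by blast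
  qed
  thus ?thesis using Cpos by blast
qed



lemma all_part:
  fixes \<alpha> K :: real and p q :: "nat \<Rightarrow> nat"
  assumes a: "\<alpha> > 0" and irr: "\<alpha> \<notin> \<rat>"
    and pos: "\<forall>n\<ge>1. p n > 0 \<and> q n > 0"
    and inc: "\<forall>n\<ge>1. q n < q (n + 1)"
    and K: "K > 0"
    and app: "\<forall>n\<ge>1. \<bar>\<alpha> * real (q n) - real (p n)\<bar> \<le> K / real (q n)"
    and e: "0 \<le> \<epsilon>" "\<epsilon> \<le> 1" and c1: "c1 > 0" and c2: "c2 > 0"
    and hq: "\<forall>n\<ge>1. \<exists>d. d dvd q n \<and> real (min d (q n div d)) \<ge> c1 * real (q n) powr (1/2 - \<epsilon>/2)"
    and hp: "\<forall>n\<ge>1. \<exists>d. d dvd p n \<and> real (min d (p n div d)) \<ge> c2 * real (p n) powr (1/2 - \<epsilon>/2)"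
    and c: "c > 0" and hc: "\<forall>n\<ge>1. real (q n) \<ge> c * real (q (n + 1))"
  shows "\<exists>C>0. \<forall>N\<ge>2. delta_min \<alpha> N \<le> C * real N powr (-1 + \<epsilon>)"
proof -
  obtain C0 where C0: "C0 > 0" and U: "\<forall>n\<ge>1. \<exists>N. 2 \<le> N \<and> real N \<le> C0 * real (q n) powr (1 + \<epsilon>)
     \<and> delta_min \<alpha> N \<le> 16 * K / real (q n) \<and> (\<forall>M. \<alpha> + real M ^ 2 \<le> \<alpha> * real (q n) \<longrightarrow> M \<le> N)"
    using per_n[OF a irr pos K app e c1 c2 hq hp] by blast
  define f where "f n = C0 * real (q n) powr (1 + \<epsilon>)" for n
  define C0' where "C0' = C0 / c powr (1 + \<epsilon>)"
  have C0': "C0' > 0" unfolding C0'_def using C0 c by simp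
  define C1 where "C1 = 16 * K * C0' powr (1 - \<epsilon>)"
  define C2 where "C2 = \<bar>delta_min \<alpha> 2\<bar> * f 1"
  have C1: "C1 > 0" unfolding C1_def using K C0' by simp
  have f1: "f 1 > 0" unfolding f_def using C0 pos by simp
  have C2: "C2 \<ge> 0" unfolding C2_def using f1 by simp
  have fge: "f n \<ge> C0 * real n" if "n \<ge> 1" for n
  proof -
    have "real n \<le> real (q n)" using q_ge[OF pos inc that] by simp
    also have "\<dots> = real (q n) powr 1" using pos that by simp
    also have "\<dots> \<le> real (q n) powr (1 + \<epsilon>)" by (rule powr_mono) (use e pos that in auto)
    finally show ?thesis unfolding f_def using C0 by simp
  qed
  have main: "delta_min \<alpha> M \<le> (C1 + C2) * real M powr (-1 + \<epsilon>)" if M: "M \<ge> 2" for M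
  proof (cases "f 1 \<le> real M")
    case True
    define k0 where "k0 = nat \<lceil>real M / C0\<rceil> + 1"
    have k01: "k0 \<ge> 1" unfolding k0_def by simp
    have "real M / C0 < real k0" unfolding k0_def by linarith
    hence "real M < C0 * real k0" using C0 by (simp add: field_simps)
    hence ex: "k0 \<ge> 1 \<and> real M < f k0" using fge[OF k01] k01 by linarith
    define k where "k = (LEAST k. k \<ge> 1 \<and> real M < f k)"
    have k: "k \<ge> 1 \<and> real M < f k" unfolding k_def by (rule LeastI[of _ k0]) (rule ex)
    have kne: "k \<noteq> 1" using k True by auto
    define n where "n = k - 1"
    have n1: "n \<ge> 1" and kn: "k = n + 1" using k kne unfolding n_def by auto
    have fn: "f n \<le> real M"
    proof (rule ccontr)
      assume "\<not> f n \<le> real M"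
      hence "n \<ge> 1 \<and> real M < f n" using n1 by simp
      hence "k \<le> n" unfolding k_def by (rule Least_le)
      thus False using kn by simp
    qed
    obtain N where N: "2 \<le> N" "real N \<le> f n" "delta_min \<alpha> N \<le> 16 * K / real (q n)"
      using U n1 unfolding f_def by blast
    have NM: "N \<le> M" using N(2) fn by linarith
    have dM: "delta_min \<alpha> M \<le> 16 * K / real (q n)" using delta_min_mono[OF N(1) NM, of \<alpha>] N(3) by linarith
    have qpos: "real (q n) > 0" "real (q (n+1)) > 0" using pos n1 by auto
    have "c powr (1 + \<epsilon>) * real (q (n+1)) powr (1 + \<epsilon>) = (c * real (q (n+1))) powr (1 + \<epsilon>)"
      using c qpos by (simp add: powr_mult)
    also have "\<dots> \<le> real (q n) powr (1 + \<epsilon>)"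
      by (rule powr_mono2) (use e c qpos hc n1 in auto)
    finally have cq: "c powr (1 + \<epsilon>) * real (q (n+1)) powr (1 + \<epsilon>) \<le> real (q n) powr (1 + \<epsilon>)" .
    have "real M < C0 * real (q (n+1)) powr (1 + \<epsilon>)" using k kn unfolding f_def by simp
    also have "\<dots> = C0' * (c powr (1 + \<epsilon>) * real (q (n+1)) powr (1 + \<epsilon>))"
      unfolding C0'_def using c by simp
    also have "\<dots> \<le> C0' * real (q n) powr (1 + \<epsilon>)" by (rule mult_left_mono[OF cq]) (use C0' in simp)
    finally have Mb: "real M \<le> C0' * real (q n) powr (1 + \<epsilon>)" by simp
    have "delta_min \<alpha> M \<le> C1 * real M powr (-1 + \<epsilon>)"
      unfolding C1_def by (rule finalineq[OF e dM _ Mb _ C0' K]) (use pos n1 M in auto)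
    moreover have "0 \<le> C2 * real M powr (-1 + \<epsilon>)" using C2 by simp
    ultimately show ?thesis by (simp add: distrib_right)
  next
    case False
    have Mp: "real M \<ge> 1" using M by simp
    have "delta_min \<alpha> M \<le> \<bar>delta_min \<alpha> 2\<bar>" using delta_min_mono[OF _ M, of \<alpha>] by simp
    have "real M powr (1 - \<epsilon>) \<le> real M powr 1" by (rule powr_mono) (use e Mp in auto)
    hence "real M powr (1 - \<epsilon>) \<le> f 1" using False Mp by simp
    hence "real M powr (1 - \<epsilon>) * real M powr (-1 + \<epsilon>) \<le> f 1 * real M powr (-1 + \<epsilon>)"
      by (rule mult_right_mono) simp
    moreover have "real M powr (1 - \<epsilon>) * real M powr (-1 + \<epsilon>) = 1"
      using Mp by (simp add: powr_add[symmetric])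
    ultimately have one: "1 \<le> f 1 * real M powr (-1 + \<epsilon>)" by simp
    have "delta_min \<alpha> M \<le> \<bar>delta_min \<alpha> 2\<bar> * 1" using delta_min_mono[OF _ M, of \<alpha>] by simp
    also have "\<dots> \<le> \<bar>delta_min \<alpha> 2\<bar> * (f 1 * real M powr (-1 + \<epsilon>))"
      by (rule mult_left_mono[OF one]) simp
    also have "\<dots> = C2 * real M powr (-1 + \<epsilon>)" unfolding C2_def by simp
    also have "\<dots> \<le> (C1 + C2) * real M powr (-1 + \<epsilon>)"
      using C1 by (simp add: distrib_right)
    finally show ?thesis .
  qed
  show ?thesis using main C1 C2 by (intro exI[of _ "C1 + C2"]) auto
qed



lemma pw_mono_N:
  assumes "\<epsilon>' \<le> \<epsilon>" "C > 0"
  shows "C * real N powr (-1 + \<epsilon>') \<le> C * real N powr (-1 + \<epsilon>)"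
proof (cases "N = 0")
  case True thus ?thesis by simp
next
  case False
  hence "real N \<ge> 1" by simp
  hence "real N powr (-1 + \<epsilon>') \<le> real N powr (-1 + \<epsilon>)" by (rule powr_mono[rotated]) (use assms in simp)
  thus ?thesis using assms by simp
qed

theorem lemma3p1:
  fixes \<alpha> K :: real and p q :: "nat \<Rightarrow> nat"
  assumes "\<alpha> > 0" and "\<alpha> \<notin> \<rat>"
    and "\<forall>n\<ge>1. p n > 0 \<and> q n > 0"
    and "\<forall>n\<ge>1. q n < q (n + 1)"
    and "K > 0"
    and "\<forall>n\<ge>1. \<bar>\<alpha> * real (q n) - real (p n)\<bar> \<le> K / real (q n)"
  shows
    "(evenly_divisible p \<and> evenly_divisible q \<longrightarrow>
        (\<forall>\<epsilon>>0. \<exists>C>0. \<exists>\<^sub>\<infinity>N. delta_min \<alpha> N \<le> C * real N powr (-1 + \<epsilon>)))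
   \<and> (strongly_evenly_divisible p \<and> strongly_evenly_divisible q \<longrightarrow>
        (\<exists>C>0. \<exists>\<^sub>\<infinity>N. delta_min \<alpha> N \<le> C * real N powr (-1)))
   \<and> ((\<exists>c>0. \<forall>n\<ge>1. real (q n) \<ge> c * real (q (n + 1))) \<longrightarrow>
        (evenly_divisible p \<and> evenly_divisible q \<longrightarrow>
          (\<forall>\<epsilon>>0. \<exists>C>0. \<forall>N\<ge>2. delta_min \<alpha> N \<le> C * real N powr (-1 + \<epsilon>)))
      \<and> (strongly_evenly_divisible p \<and> strongly_evenly_divisible q \<longrightarrow>
          (\<exists>C>0. \<forall>N\<ge>2. delta_min \<alpha> N \<le> C * real N powr (-1))))"
proof -
  note H = assms
  have EV: "\<exists>c1>0. \<exists>c2>0. (\<forall>n\<ge>1. \<exists>d. d dvd q n \<and> real (min d (q n div d)) \<ge> c1 * real (q n) powr (1/2 - \<epsilon>'/2))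
        \<and> (\<forall>n\<ge>1. \<exists>d. d dvd p n \<and> real (min d (p n div d)) \<ge> c2 * real (p n) powr (1/2 - \<epsilon>'/2))"
    if ev: "evenly_divisible p" "evenly_divisible q" "\<epsilon>' > 0" for \<epsilon>'
  proof -
    have "\<epsilon>'/2 > 0" using ev by simp
    then obtain c1 c2 where "c1 > 0" "\<forall>n\<ge>1. \<exists>d. d dvd q n \<and> real (min d (q n div d)) \<ge> c1 * real (q n) powr (1/2 - \<epsilon>'/2)"
      "c2 > 0" "\<forall>n\<ge>1. \<exists>d. d dvd p n \<and> real (min d (p n div d)) \<ge> c2 * real (p n) powr (1/2 - \<epsilon>'/2)"
      using ev(1,2) unfolding evenly_divisible_def by blast
    thus ?thesis by blast
  qed
  have SEV: "\<exists>c1>0. \<exists>c2>0. (\<forall>n\<ge>1. \<exists>d. d dvd q n \<and> real (min d (q n div d)) \<ge> c1 * real (q n) powr (1/2 - 0/2))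
        \<and> (\<forall>n\<ge>1. \<exists>d. d dvd p n \<and> real (min d (p n div d)) \<ge> c2 * real (p n) powr (1/2 - 0/2))"
    if "strongly_evenly_divisible p" "strongly_evenly_divisible q"
    using that unfolding strongly_evenly_divisible_def by auto
  have P1: "\<forall>\<epsilon>>0. \<exists>C>0. \<exists>\<^sub>\<infinity>N. delta_min \<alpha> N \<le> C * real N powr (-1 + \<epsilon>)"
    if ev2: "evenly_divisible p" "evenly_divisible q"
  proof (intro allI impI)
    fix \<epsilon> :: real assume e: "\<epsilon> > 0"
    define \<epsilon>' where "\<epsilon>' = min \<epsilon> 1"
    have e': "0 \<le> \<epsilon>'" "\<epsilon>' \<le> 1" "\<epsilon>' > 0" "\<epsilon>' \<le> \<epsilon>" using e unfolding \<epsilon>'_def by auto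
    obtain c1 c2 where c: "c1 > 0" "c2 > 0"
      "\<forall>n\<ge>1. \<exists>d. d dvd q n \<and> real (min d (q n div d)) \<ge> c1 * real (q n) powr (1/2 - \<epsilon>'/2)"
      "\<forall>n\<ge>1. \<exists>d. d dvd p n \<and> real (min d (p n div d)) \<ge> c2 * real (p n) powr (1/2 - \<epsilon>'/2)"
      using EV[OF ev2 e'(3)] by blast
    obtain C where C: "C > 0" "\<exists>\<^sub>\<infinity>N. delta_min \<alpha> N \<le> C * real N powr (-1 + \<epsilon>')"
      using inf_part[OF H e'(1,2) c] by blast
    have "\<exists>\<^sub>\<infinity>N. delta_min \<alpha> N \<le> C * real N powr (-1 + \<epsilon>)"
      using C(2) by (rule frequently_elim1) (use pw_mono_N[OF e'(4) C(1)] in \<open>blast intro: order_trans\<close>)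
    thus "\<exists>C>0. \<exists>\<^sub>\<infinity>N. delta_min \<alpha> N \<le> C * real N powr (-1 + \<epsilon>)" using C(1) by blast
  qed
  have P2: "\<exists>C>0. \<exists>\<^sub>\<infinity>N. delta_min \<alpha> N \<le> C * real N powr (-1)"
    if sv2: "strongly_evenly_divisible p" "strongly_evenly_divisible q"
  proof -
    obtain c1 c2 where c: "c1 > 0" "c2 > 0"
      "\<forall>n\<ge>1. \<exists>d. d dvd q n \<and> real (min d (q n div d)) \<ge> c1 * real (q n) powr (1/2 - 0/2)"
      "\<forall>n\<ge>1. \<exists>d. d dvd p n \<and> real (min d (p n div d)) \<ge> c2 * real (p n) powr (1/2 - 0/2)"
      using SEV[OF sv2] by blast
    obtain C where C: "C > 0" "\<exists>\<^sub>\<infinity>N. delta_min \<alpha> N \<le> C * real N powr (-1 + 0)"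
      using inf_part[OF H _ _ c] by auto
    thus ?thesis by auto
  qed
  have P3: "\<forall>\<epsilon>>0. \<exists>C>0. \<forall>N\<ge>2. delta_min \<alpha> N \<le> C * real N powr (-1 + \<epsilon>)"
    if ev3: "evenly_divisible p" "evenly_divisible q" "c > 0" "\<forall>n\<ge>1. real (q n) \<ge> c * real (q (n + 1))" for c
  proof (intro allI impI)
    fix \<epsilon> :: real assume e: "\<epsilon> > 0"
    define \<epsilon>' where "\<epsilon>' = min \<epsilon> 1"
    have e': "0 \<le> \<epsilon>'" "\<epsilon>' \<le> 1" "\<epsilon>' > 0" "\<epsilon>' \<le> \<epsilon>" using e unfolding \<epsilon>'_def by auto
    obtain c1 c2 where c: "c1 > 0" "c2 > 0"
      "\<forall>n\<ge>1. \<exists>d. d dvd q n \<and> real (min d (q n div d)) \<ge> c1 * real (q n) powr (1/2 - \<epsilon>'/2)"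
      "\<forall>n\<ge>1. \<exists>d. d dvd p n \<and> real (min d (p n div d)) \<ge> c2 * real (p n) powr (1/2 - \<epsilon>'/2)"
      using EV[OF ev3(1,2) e'(3)] by blast
    obtain C where C: "C > 0" "\<forall>N\<ge>2. delta_min \<alpha> N \<le> C * real N powr (-1 + \<epsilon>')"
      using all_part[OF H e'(1,2) c ev3(3,4)] by blast
    show "\<exists>C>0. \<forall>N\<ge>2. delta_min \<alpha> N \<le> C * real N powr (-1 + \<epsilon>)"
      using C pw_mono_N[OF e'(4) C(1)] by (meson order_trans)
  qed
  have P4: "\<exists>C>0. \<forall>N\<ge>2. delta_min \<alpha> N \<le> C * real N powr (-1)"
    if sv: "strongly_evenly_divisible p" "strongly_evenly_divisible q" "c > 0" "\<forall>n\<ge>1. real (q n) \<ge> c * real (q (n + 1))" for c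
  proof -
    obtain c1 c2 where c: "c1 > 0" "c2 > 0"
      "\<forall>n\<ge>1. \<exists>d. d dvd q n \<and> real (min d (q n div d)) \<ge> c1 * real (q n) powr (1/2 - 0/2)"
      "\<forall>n\<ge>1. \<exists>d. d dvd p n \<and> real (min d (p n div d)) \<ge> c2 * real (p n) powr (1/2 - 0/2)"
      using SEV[OF sv(1,2)] by blast
    obtain C where C: "C > 0" "\<forall>N\<ge>2. delta_min \<alpha> N \<le> C * real N powr (-1 + 0)"
      using all_part[OF H _ _ c sv(3,4)] by auto
    thus ?thesis by auto
  qed
  show ?thesis using P1 P2 P3 P4 by blast
qed


end
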